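(* Let $k,p$ (functions of $n$) satisfy $k=\omega(\log n)$ and $p=\omega(\log n/n)$, and with $\delta:=4.03p$ and $R:=k/n$ assume $H_2(\delta)+\delta\log 3<1-R$, where $H_2(x)=-x\log x-(1-x)\log(1-x)$. Consider the function family described in the context. Suppose there exists an algorithm $\mathcal A$ running in time $T$ such that $\Pr_{\mathcal A,I,x}[f_I(\mathcal A(I,f_I(x)))=f_I(x)]=1/\mathrm{poly}(n)$, where $I\sim\mathsf{Gen}(1^n)$ and $x\sim\mathsf{Sample}(I)$. Then there exists an algorithm $\mathcal B$ running in time $T+\mathrm{poly}(n)$ which solves Search $\mathsf{LSN}(k,n,p)$ with probability $1/2^k+1/\mathrm{poly}(n)=1/\mathrm{poly}(n)$.
   Context: Symplectic inner product on $\mathbb{Z}_2^{2n}$: $(\mathbf a,\mathbf b)\odot(\mathbf a',\mathbf b')=\mathbf a\cdot\mathbf b'+\mathbf a'\cdot\mathbf b\pmod2$; a matrix is isotropic if its columns are pairwise symplectically orthogonal. $\mathcal{D}_p^{\otimes n}$: random $\mathbf e\in\mathbb{Z}_2^{2n}$ with independent pairs $(e_j,e_{n+j})$, each $(0,0)$ w.p. $1-p$ and each of $(0,1),(1,0),(1,1)$ w.p. $p/3$. The weight of $\mathbf e\in\mathbb{Z}_2^{2n}$ is the number of $j$ with $(e_j,e_{n+j})\neq(0,0)$; $\mathcal W_d$ is the set of $\mathbf e\in\mathbb{Z}_2^{2n}$ of weight at most $d$. Logarithms are base 2. Search $\mathsf{LSN}(k,n,p)$: given $([\mathbf A|\mathbf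 B],\mathbf A\mathbf r+\mathbf B\mathbf y+\mathbf e)$ with $\mathbf A\in\mathbb{Z}_2^{2n\times n}$, $\mathbf B\in\mathbb{Z}_2^{2n\times k}$ uniformly random subject to $\mathbf A$, $\mathbf B$ isotropic and $[\mathbf A|\mathbf B]$ full rank, $\mathbf r\sim\mathbb{Z}_2^n$, $\mathbf y\sim\mathbb{Z}_2^k$, $\mathbf e\sim\mathcal{D}_p^{\otimes n}$, output $\mathbf y$ with probability at least $1/2^k+1/\mathrm{poly}(n)$. Function family: $\mathsf{Gen}(1^n)$ outputs $I=(\mathbf A,\mathbf B)$ sampled as in $\mathsf{LSN}$. Domain $\mathcal D_I=\mathbb{Z}_2^n\times\mathbb{Z}_2^k\times\mathcal W_{2.01np}$. $\mathsf{Sample}(I)$ outputs $(\mathbf r,\mathbf y,\mathbf e)$ with $\mathbf r\sim\mathbb{Z}_2^n$, $\mathbf y\sim\mathbb{Z}_2^k$, $\mathbf e\sim\mathcal{D}_p^{\otimes n}$, replacing $\mathbf e$ by $\mathbf 0$ if its weight exceeds $2.01np$. $f_I(\mathbf r,\mathbf y,\mathbf e)=(\mathbf A,\mathbf B,\mathbf A\mathbf r+\mathbf B\mathbf y+\mathbf e)$. *)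

theory Defs
  imports "HOL-Probability.Probability" "HOL-Library.Landau_Symbols"
begin

text \<open>Vectors over Z_2 are bool lists (True = 1, addition = xor).
 A vector of Z_2^{2n} is a list of length 2n whose first n entries are the
 a-part and last n entries the b-part. A 2n x m matrix is the list of its m columns.\<close>

type_synonym vec = "bool list"
type_synonym inst = "vec list \<times> vec list"

definition vadd :: "vec \<Rightarrow> vec \<Rightarrow> vec" where
  "vadd u v = map2 (\<noteq>) u v"

definition zerovec :: "nat \<Rightarrow> vec" where
  "zerovec m = replicate m False"

definition dotp :: "vec \<Rightarrow> vec \<Rightarrow> bool" where
  "dotp u v = odd (length (filter id (map2 (\<and>) u v)))"

definition symp :: "nat \<Rightarrow> vec \<Rightarrow> vec \<Rightarrow> bool" where
  "symp n u v = (dotp (take n u) (drop n v) \<noteq> dotp (take n v) (drop n u))"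

definition isotropic :: "nat \<Rightarrow> vec list \<Rightarrow> bool" where
  "isotropic n M = (\<forall>u\<in>set M. \<forall>v\<in>set M. \<not> symp n u v)"

definition mat_vec :: "nat \<Rightarrow> vec list \<Rightarrow> vec \<Rightarrow> vec" where
  "mat_vec m M x = foldr vadd (map fst (filter snd (zip M x))) (zerovec m)"

definition col_indep :: "nat \<Rightarrow> vec list \<Rightarrow> bool" where
  "col_indep m M = (\<forall>x. length x = length M \<and> mat_vec m M x = zerovec m \<longrightarrow> x = zerovec (length M))"

definition vecs :: "nat \<Rightarrow> vec set" where
  "vecs m = {v. length v = m}"

definition mats :: "nat \<Rightarrow> nat \<Rightarrow> vec list set" where
  "mats m c = {M. length M = c \<and> (\<forall>v\<in>set M. length v = m)}"

definition lsn_instances :: "nat \<Rightarrow> nat \<Rightarrow> inst set" where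
  "lsn_instances n k = {(MA, MB). MA \<in> mats (2*n) n \<and> MB \<in> mats (2*n) k \<and>
      isotropic n MA \<and> isotropic n MB \<and> col_indep (2*n) (MA @ MB)}"

definition Gen :: "nat \<Rightarrow> nat \<Rightarrow> inst pmf" where
  "Gen n k = pmf_of_set (lsn_instances n k)"

text \<open>Single-qubit depolarizing pair distribution.\<close>
definition pauli_pmf :: "real \<Rightarrow> (bool \<times> bool) pmf" where
  "pauli_pmf p = bind_pmf (bernoulli_pmf p)
     (\<lambda>b. if b then pmf_of_set {(False,True),(True,False),(True,True)} else return_pmf (False,False))"

fun noise_pairs :: "real \<Rightarrow> nat \<Rightarrow> (bool \<times> bool) list pmf" where
  "noise_pairs p 0 = return_pmf []"
| "noise_pairs p (Suc n) = bind_pmf (pauli_pmf p) (\<lambda>x. map_pmf (\<lambda>xs. x # xs) (noise_pairs p n))"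

text \<open>D_p^{\<otimes>n}: pair j is (e_j, e_{n+j}).\<close>
definition noise :: "real \<Rightarrow> nat \<Rightarrow> vec pmf" where
  "noise p n = map_pmf (\<lambda>ps. map fst ps @ map snd ps) (noise_pairs p n)"

definition weight :: "nat \<Rightarrow> vec \<Rightarrow> nat" where
  "weight n e = card {j. j < n \<and> (e ! j \<or> e ! (n + j))}"

definition Wset :: "nat \<Rightarrow> real \<Rightarrow> vec set" where
  "Wset n d = {e \<in> vecs (2*n). real (weight n e) \<le> d}"

definition dom_set :: "nat \<Rightarrow> nat \<Rightarrow> real \<Rightarrow> (vec \<times> vec \<times> vec) set" where
  "dom_set n k p = vecs n \<times> vecs k \<times> Wset n (2.01 * real n * p)"

definition encode :: "nat \<Rightarrow> inst \<Rightarrow> vec \<Rightarrow> vec \<Rightarrow> vec \<Rightarrow> vec" where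
  "encode n I r y e = vadd (vadd (mat_vec (2*n) (fst I) r) (mat_vec (2*n) (snd I) y)) e"

definition fI :: "nat \<Rightarrow> inst \<Rightarrow> vec \<times> vec \<times> vec \<Rightarrow> vec list \<times> vec list \<times> vec" where
  "fI n I x = (case x of (r, y, e) \<Rightarrow> (fst I, snd I, encode n I r y e))"

definition Sample :: "nat \<Rightarrow> nat \<Rightarrow> real \<Rightarrow> inst \<Rightarrow> (vec \<times> vec \<times> vec) pmf" where
  "Sample n k p I =
     bind_pmf (pmf_of_set (vecs n)) (\<lambda>r.
     bind_pmf (pmf_of_set (vecs k)) (\<lambda>y.
     bind_pmf (noise p n) (\<lambda>e.
     return_pmf (r, y, if real (weight n e) > 2.01 * real n * p then zerovec (2*n) else e))))"

definition invert_success ::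
  "nat \<Rightarrow> nat \<Rightarrow> real \<Rightarrow> (inst \<Rightarrow> vec list \<times> vec list \<times> vec \<Rightarrow> (vec \<times> vec \<times> vec) pmf) \<Rightarrow> real" where
  "invert_success n k p Adv = pmf
     (bind_pmf (Gen n k) (\<lambda>I.
      bind_pmf (Sample n k p I) (\<lambda>x.
      bind_pmf (Adv I (fI n I x)) (\<lambda>out.
      return_pmf (out \<in> dom_set n k p \<and> fI n I out = fI n I x))))) True"

definition lsn_success ::
  "nat \<Rightarrow> nat \<Rightarrow> real \<Rightarrow> (vec list \<times> vec list \<times> vec \<Rightarrow> vec pmf) \<Rightarrow> real" where
  "lsn_success n k p Solver = pmf
     (bind_pmf (Gen n k) (\<lambda>I.
      bind_pmf (pmf_of_set (vecs n)) (\<lambda>r.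
      bind_pmf (pmf_of_set (vecs k)) (\<lambda>y.
      bind_pmf (noise p n) (\<lambda>e.
      bind_pmf (Solver (fst I, snd I, encode n I r y e)) (\<lambda>y'.
      return_pmf (y' = y))))))) True"

definition reduction ::
  "(inst \<Rightarrow> vec list \<times> vec list \<times> vec \<Rightarrow> (vec \<times> vec \<times> vec) pmf) \<Rightarrow> (vec list \<times> vec list \<times> vec \<Rightarrow> vec pmf)" where
  "reduction Adv = (\<lambda>(MA, MB, z). map_pmf (\<lambda>(r, y, e). y) (Adv (MA, MB) (MA, MB, z)))"

definition H2 :: "real \<Rightarrow> real" where
  "H2 x = - x * log 2 x - (1 - x) * log 2 (1 - x)"

end

theory Submission
  imports Defs
begin


lemma length_vadd[simp]: "length (vadd u v) = min (length u) (length v)"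
  by (simp add: vadd_def)
lemma nth_vadd[simp]: "i < length u \<Longrightarrow> i < length v \<Longrightarrow> vadd u v ! i = (u!i \<noteq> v!i)"
  by (simp add: vadd_def)
lemma vadd_Cons[simp]: "vadd (a#u) (b#v) = (a \<noteq> b) # vadd u v"
  by (simp add: vadd_def)
lemma vadd_Nil[simp]: "vadd [] v = []" "vadd u [] = []"
  by (simp_all add: vadd_def)
lemma length_zerovec[simp]: "length (zerovec m) = m" by (simp add: zerovec_def)
lemma nth_zerovec[simp]: "i < m \<Longrightarrow> zerovec m ! i = False" by (simp add: zerovec_def)
lemma vecs_iff[simp]: "v \<in> vecs m \<longleftrightarrow> length v = m" by (simp add: vecs_def)

lemma dotp_Cons[simp]: "dotp (a#u) (b#v) = ((a \<and> b) \<noteq> dotp u v)"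
  by (cases a; cases b) (simp_all add: dotp_def)
lemma dotp_Nil[simp]: "dotp [] v = False" "dotp u [] = False"
  by (simp_all add: dotp_def)

lemma dotp_vadd_left:
  "length u = length v \<Longrightarrow> length u' = length v \<Longrightarrow> dotp (vadd u u') v = (dotp u v \<noteq> dotp u' v)"
proof (induction u arbitrary: u' v)
  case Nil then show ?case by simp
next
  case (Cons a u) then show ?case by (cases u'; cases v) auto
qed

lemma dotp_comm: "dotp u v = dotp v u"
proof (induction u arbitrary: v)
  case Nil then show ?case by simp
next
  case (Cons a u) then show ?case by (cases v) auto
qed

lemma dotp_card: "dotp u v = odd (card {i. i < length u \<and> i < length v \<and> u!i \<and> v!i})"
proof -
  have "{i. i < length u \<and> i < length v \<and> map2 (\<and>) u v ! i} = {i. i < length u \<and> i < length v \<and> u!i \<and> v!i}"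
    by auto
  then show ?thesis unfolding dotp_def by (simp add: length_filter_conv_card)
qed

lemma dotp_false: "(\<And>i. i < length v \<Longrightarrow> \<not> v!i) \<Longrightarrow> dotp u v = False"
proof -
  assume a: "\<And>i. i < length v \<Longrightarrow> \<not> v!i"
  have e: "{i. i < length u \<and> i < length v \<and> u!i \<and> v!i} = {}" using a by auto
  show ?thesis unfolding dotp_card by (simp only: e card.empty) simp
qed

lemma take_vadd: "take n (vadd u v) = vadd (take n u) (take n v)"
  by (simp add: vadd_def take_map take_zip)
lemma drop_vadd: "drop n (vadd u v) = vadd (drop n u) (drop n v)"
  by (simp add: vadd_def drop_map drop_zip)

lemma symp_vadd_left:
  "length u = 2*n \<Longrightarrow> length u' = 2*n \<Longrightarrow> length v = 2*n \<Longrightarrow>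
   symp n (vadd u u') v = (symp n u v \<noteq> symp n u' v)"
  unfolding symp_def take_vadd drop_vadd
  by (subst dotp_vadd_left, simp, simp)+ (subst dotp_comm, subst dotp_vadd_left, simp, simp, auto simp: dotp_comm)

lemma symp_comm: "symp n u v = symp n v u"
  unfolding symp_def by auto

lemma symp_self[simp]: "symp n u u = False"
  unfolding symp_def by auto

lemma symp_vadd_right:
  "length u = 2*n \<Longrightarrow> length u' = 2*n \<Longrightarrow> length v = 2*n \<Longrightarrow>
   symp n v (vadd u u') = (symp n v u \<noteq> symp n v u')"
  using symp_vadd_left[of u n u' v] by (simp add: symp_comm)

lemma vec_eqI: "length u = length v \<Longrightarrow> (\<And>i. i < length u \<Longrightarrow> u!i = v!i) \<Longrightarrow> u = v"
  by (rule nth_equalityI) auto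



lemma vadd_comm: "vadd u v = vadd v u"
  by (rule vec_eqI) auto
lemma vadd_assoc: "vadd (vadd u v) w = vadd u (vadd v w)"
  by (rule vec_eqI) auto
lemma vadd_self: "vadd u u = zerovec (length u)"
  by (rule vec_eqI) auto
lemma vadd_zero: "length u = m \<Longrightarrow> vadd u (zerovec m) = u"
  by (rule vec_eqI) auto
lemma zero_vadd: "length u = m \<Longrightarrow> vadd (zerovec m) u = u"
  by (rule vec_eqI) auto

lemma dotp_repF[simp]: "dotp u (replicate m False) = False"
proof (induction u arbitrary: m)
  case (Cons a u) then show ?case by (cases m) auto
qed simp

lemma symp_zero: "length v = 2*n \<Longrightarrow> symp n (zerovec (2*n)) v = False"
  unfolding symp_def
  by (simp add: dotp_false dotp_comm[of "take n (zerovec (2*n))"] dotp_comm[of "drop n (zerovec (2*n))"])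
     (simp add: zerovec_def)

definition tv :: "nat \<Rightarrow> vec \<Rightarrow> vec \<Rightarrow> vec" where
  "tv n v x = (if symp n x v then vadd x v else x)"

lemma length_tv[simp]: "length x = 2*n \<Longrightarrow> length v = 2*n \<Longrightarrow> length (tv n v x) = 2*n"
  by (simp add: tv_def)

lemma tv_vadd: "length x = 2*n \<Longrightarrow> length y = 2*n \<Longrightarrow> length v = 2*n \<Longrightarrow>
   tv n v (vadd x y) = vadd (tv n v x) (tv n v y)"
  unfolding tv_def symp_vadd_left
  by (auto intro!: vec_eqI)

lemma tv_symp: "length x = 2*n \<Longrightarrow> length y = 2*n \<Longrightarrow> length v = 2*n \<Longrightarrow>
   symp n (tv n v x) (tv n v y) = symp n x y"
  unfolding tv_def
  by (auto simp: symp_vadd_left symp_vadd_right symp_comm[of n v x] symp_comm[of n v y])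

lemma tv_tv[simp]: "length x = 2*n \<Longrightarrow> length v = 2*n \<Longrightarrow> tv n v (tv n v x) = x"
  unfolding tv_def
  by (auto simp: symp_vadd_left vadd_assoc vadd_self vadd_zero)

lemma tv_zero[simp]: "length v = 2*n \<Longrightarrow> tv n v (zerovec (2*n)) = zerovec (2*n)"
  unfolding tv_def by (simp add: symp_zero)

lemma tv_map_to: "length u = 2*n \<Longrightarrow> length w = 2*n \<Longrightarrow> symp n u w \<Longrightarrow> tv n (vadd u w) u = w"
  unfolding tv_def
  by (auto simp: symp_vadd_right intro!: vec_eqI)

lemma mat_vec_Nil[simp]: "mat_vec m [] x = zerovec m" "mat_vec m M [] = zerovec m"
  by (simp_all add: mat_vec_def)

lemma mat_vec_Cons[simp]: "mat_vec m (c#M) (b#x) = (if b then vadd c (mat_vec m M x) else mat_vec m M x)"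
  by (simp add: mat_vec_def)

lemma length_mat_vec[simp]: "\<forall>c\<in>set M. length c = m \<Longrightarrow> length (mat_vec m M x) = m"
proof (induction M arbitrary: x)
  case Nil then show ?case by simp
next
  case (Cons c M) then show ?case by (cases x) auto
qed

lemma mat_vec_map:
  assumes "\<forall>a b. length a = m \<longrightarrow> length b = m \<longrightarrow> T (vadd a b) = vadd (T a) (T b)"
    and "T (zerovec m) = zerovec m"
  shows "\<forall>c\<in>set M. length c = m \<Longrightarrow> mat_vec m (map T M) x = T (mat_vec m M x)"
proof (induction M arbitrary: x)
  case Nil then show ?case using assms by simp
next
  case (Cons c M) then show ?case using assms by (cases x) auto
qed

lemma mat_vec_append:
  "length A = length r \<Longrightarrow> \<forall>c\<in>set A. length c = m \<Longrightarrow> \<forall>c\<in>set B. length c = m \<Longrightarrow>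
   mat_vec m (A@B) (r@y) = vadd (mat_vec m A r) (mat_vec m B y)"
proof (induction A r rule: list_induct2)
  case Nil then show ?case by (simp add: zero_vadd)
next
  case (Cons c A b r) then show ?case by (auto simp: vadd_assoc)
qed

lemma mat_vec_vadd:
  "length x = length M \<Longrightarrow> length x' = length M \<Longrightarrow> \<forall>c\<in>set M. length c = m \<Longrightarrow>
   mat_vec m M (vadd x x') = vadd (mat_vec m M x) (mat_vec m M x')"
proof (induction M arbitrary: x x')
  case Nil then show ?case by (simp add: vadd_zero)
next
  case (Cons c M)
  then obtain b xs b' xs' where x: "x = b#xs" and x': "x' = b'#xs'"
    by (cases x; cases x') auto
  have l: "length (mat_vec m M xs) = m" "length (mat_vec m M xs') = m" "length c = m"
    using Cons.prems by auto
  have ih: "mat_vec m M (vadd xs xs') = vadd (mat_vec m M xs) (mat_vec m M xs')"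
    using Cons x x' by auto
  show ?case unfolding x x' using l
    by (simp add: ih) (auto intro!: vec_eqI)
qed

lemma mat_vec_nth:
  "\<forall>c\<in>set M. length c = m \<Longrightarrow> i < m \<Longrightarrow> mat_vec m M x ! i = dotp (map (\<lambda>c. c!i) M) x"
proof (induction M arbitrary: x)
  case Nil then show ?case by simp
next
  case (Cons c M) then show ?case by (cases x) auto
qed



definition Sb :: "nat \<Rightarrow> nat \<Rightarrow> inst \<Rightarrow> vec set" where
  "Sb n k I = (\<lambda>(u,v). mat_vec (2*n) (fst I @ snd I) (u@v)) ` {(u,v). length u = n \<and> length v = k \<and> v \<noteq> zerovec k}"

definition Phi :: "nat \<Rightarrow> vec \<Rightarrow> inst \<Rightarrow> inst" where
  "Phi n v I = (map (tv n v) (fst I), map (tv n v) (snd I))"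

lemma inst_cols: "I \<in> lsn_instances n k \<Longrightarrow> \<forall>c\<in>set (fst I @ snd I). length c = 2*n"
  by (auto simp: lsn_instances_def mats_def)

lemma mat_vec_tv:
  assumes "length v = 2*n" "\<forall>c\<in>set M. length c = 2*n"
  shows "mat_vec (2*n) (map (tv n v) M) x = tv n v (mat_vec (2*n) M x)"
  by (rule mat_vec_map) (use assms in \<open>auto simp: tv_vadd\<close>)

lemma Phi_L:
  assumes v: "length v = 2*n" and I: "I \<in> lsn_instances n k"
  shows "Phi n v I \<in> lsn_instances n k"
proof -
  obtain A B where AB: "I = (A,B)" by (cases I)
  have A: "A \<in> mats (2*n) n" and B: "B \<in> mats (2*n) k" and iA: "isotropic n A" and iB: "isotropic n B"
    and ci: "col_indep (2*n) (A@B)"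
    using I AB by (auto simp: lsn_instances_def)
  have cA: "\<forall>c\<in>set A. length c = 2*n" and cB: "\<forall>c\<in>set B. length c = 2*n" using A B by (auto simp: mats_def)
  have "map (tv n v) A \<in> mats (2*n) n" using A v by (auto simp: mats_def)
  moreover have "map (tv n v) B \<in> mats (2*n) k" using B v by (auto simp: mats_def)
  moreover have "isotropic n (map (tv n v) A)" using iA cA v by (auto simp: isotropic_def tv_symp)
  moreover have "isotropic n (map (tv n v) B)" using iB cB v by (auto simp: isotropic_def tv_symp)
  moreover have "col_indep (2*n) (map (tv n v) A @ map (tv n v) B)"
    unfolding col_indep_def
  proof (intro allI impI)
    fix x assume h: "length x = length (map (tv n v) A @ map (tv n v) B) \<and>
      mat_vec (2 * n) (map (tv n v) A @ map (tv n v) B) x = zerovec (2 * n)"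
    have cAB: "\<forall>c\<in>set (A@B). length c = 2*n" using cA cB by auto
    have "tv n v (mat_vec (2*n) (A@B) x) = zerovec (2*n)"
      using h mat_vec_tv[OF v cAB, of x] by simp
    then have "tv n v (tv n v (mat_vec (2*n) (A@B) x)) = zerovec (2*n)" using v by simp
    then have "mat_vec (2*n) (A@B) x = zerovec (2*n)" using v cAB by simp
    then show "x = zerovec (length (map (tv n v) A @ map (tv n v) B))"
      using ci h unfolding col_indep_def by auto
  qed
  ultimately show ?thesis using AB by (simp add: Phi_def lsn_instances_def)
qed

lemma Phi_Phi:
  assumes v: "length v = 2*n" and I: "I \<in> lsn_instances n k"
  shows "Phi n v (Phi n v I) = I"
proof -
  have "\<forall>c\<in>set (fst I @ snd I). length c = 2*n" using inst_cols[OF I] .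
  then show ?thesis using v by (cases I) (auto simp: Phi_def intro!: map_idI)
qed

lemma Sb_subset: "I \<in> lsn_instances n k \<Longrightarrow> Sb n k I \<subseteq> vecs (2*n)"
  using inst_cols[of I n k] by (auto simp: Sb_def)

lemma Sb_Phi:
  assumes v: "length v = 2*n" and I: "I \<in> lsn_instances n k"
  shows "Sb n k (Phi n v I) = tv n v ` Sb n k I"
proof -
  have c: "\<forall>c\<in>set (fst I @ snd I). length c = 2*n" using inst_cols[OF I] .
  have e: "fst (Phi n v I) @ snd (Phi n v I) = map (tv n v) (fst I @ snd I)"
    by (simp add: Phi_def)
  show ?thesis unfolding Sb_def e mat_vec_tv[OF v c] image_image
    by (simp add: case_prod_beta)
qed

lemma mem_Sb_Phi:
  assumes v: "length v = 2*n" and I: "I \<in> lsn_instances n k" and w: "length w = 2*n"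
  shows "w \<in> Sb n k (Phi n v I) \<longleftrightarrow> tv n v w \<in> Sb n k I"
proof -
  have S: "\<And>s. s \<in> Sb n k I \<Longrightarrow> length s = 2*n" using Sb_subset[OF I] by auto
  show ?thesis unfolding Sb_Phi[OF v I]
  proof
    assume "w \<in> tv n v ` Sb n k I"
    then obtain s where "s \<in> Sb n k I" "w = tv n v s" by auto
    then show "tv n v w \<in> Sb n k I" using S v by auto
  next
    assume "tv n v w \<in> Sb n k I"
    then show "w \<in> tv n v ` Sb n k I" using v w by (intro image_eqI[of _ _ "tv n v w"]) auto
  qed
qed

definition cnt :: "nat \<Rightarrow> nat \<Rightarrow> vec \<Rightarrow> nat" where
  "cnt n k w = card {I \<in> lsn_instances n k. w \<in> Sb n k I}"

lemma cnt_tv: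
  assumes v: "length v = 2*n" and w: "length w = 2*n"
  shows "cnt n k w = cnt n k (tv n v w)"
proof -
  let ?L = "lsn_instances n k"
  have eq: "{I \<in> ?L. w \<in> Sb n k I} = Phi n v ` {I \<in> ?L. tv n v w \<in> Sb n k I}"
  proof
    show "{I \<in> ?L. w \<in> Sb n k I} \<subseteq> Phi n v ` {I \<in> ?L. tv n v w \<in> Sb n k I}"
    proof
      fix I assume I: "I \<in> {I \<in> ?L. w \<in> Sb n k I}"
      then have I1: "I \<in> ?L" by simp
      have J: "Phi n v I \<in> ?L" using Phi_L[OF v I1] .
      have "tv n v w \<in> Sb n k (Phi n v I)"
        using mem_Sb_Phi[OF v I1, of "tv n v w"] I v w by simp
      then show "I \<in> Phi n v ` {I \<in> ?L. tv n v w \<in> Sb n k I}"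
        using J Phi_Phi[OF v I1] by (intro image_eqI[of _ _ "Phi n v I"]) auto
    qed
  next
    show "Phi n v ` {I \<in> ?L. tv n v w \<in> Sb n k I} \<subseteq> {I \<in> ?L. w \<in> Sb n k I}"
      using Phi_L[OF v] mem_Sb_Phi[OF v _ w] by auto
  qed
  have inj: "inj_on (Phi n v) {I \<in> ?L. tv n v w \<in> Sb n k I}"
    by (rule inj_on_inverseI[of _ "Phi n v"]) (use Phi_Phi[OF v] in auto)
  show ?thesis unfolding cnt_def eq card_image[OF inj] ..
qed

lemma cnt_symp:
  assumes u: "length u = 2*n" and w: "length w = 2*n" and s: "symp n u w"
  shows "cnt n k u = cnt n k w"
  using cnt_tv[of "vadd u w" n u k] tv_map_to[OF u w s] u w by simp

definition unitv :: "nat \<Rightarrow> nat \<Rightarrow> vec" where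
  "unitv m i = map (\<lambda>j. j = i) [0..<m]"

lemma length_unitv[simp]: "length (unitv m i) = m" by (simp add: unitv_def)
lemma nth_unitv[simp]: "j < m \<Longrightarrow> unitv m i ! j = (j = i)" by (simp add: unitv_def)

lemma dotp_unitv: "length a = m \<Longrightarrow> i < m \<Longrightarrow> dotp a (unitv m i) = a!i"
proof -
  assume h: "length a = m" "i < m"
  have "{j. j < length a \<and> j < length (unitv m i) \<and> a!j \<and> unitv m i ! j} = (if a!i then {i} else {})"
    using h by auto
  then show ?thesis unfolding dotp_card by simp
qed

lemma dotp_zerovec[simp]: "dotp (zerovec m) x = False"
  by (metis dotp_comm dotp_repF zerovec_def)

lemma nondeg:
  assumes u: "length u = 2*n" and nz: "u \<noteq> zerovec (2*n)"
  shows "\<exists>z. length z = 2*n \<and> symp n u z"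
proof -
  obtain i where i: "i < 2*n" "u!i"
  proof (rule ccontr)
    assume "\<not> thesis"
    with that have "\<forall>i<2*n. \<not> u!i" by blast
    then have "u = zerovec (2*n)" using u by (intro vec_eqI) auto
    then show False using nz by simp
  qed
  show ?thesis
  proof (cases "i < n")
    case True
    let ?z = "zerovec n @ unitv n i"
    have "symp n u ?z = u!i" unfolding symp_def using u True
      by (simp add: dotp_unitv)
    then show ?thesis using i by (intro exI[of _ ?z]) auto
  next
    case False
    let ?z = "unitv n (i-n) @ zerovec n"
    have "symp n u ?z = u!i" unfolding symp_def using u False i
      by (simp add: dotp_comm[of "unitv n (i-n)"] dotp_unitv dotp_comm[of "take n u"] zerovec_def)
    then show ?thesis using i by (intro exI[of _ ?z]) auto
  qed
qed

lemma cnt_eq: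
  assumes u: "length u = 2*n" "u \<noteq> zerovec (2*n)" and w: "length w = 2*n" "w \<noteq> zerovec (2*n)"
  shows "cnt n k u = cnt n k w"
proof -
  obtain z1 where z1: "length z1 = 2*n" "symp n u z1" using nondeg[OF u] by auto
  obtain z2 where z2: "length z2 = 2*n" "symp n w z2" using nondeg[OF w] by auto
  obtain z where z: "length z = 2*n" "symp n u z" "symp n w z"
  proof (cases "symp n w z1")
    case True then show ?thesis using that z1 by blast
  next
    case F1: False
    show ?thesis
    proof (cases "symp n u z2")
      case True then show ?thesis using that z2 by (meson symp_comm)
    next
      case False
      have "symp n u (vadd z1 z2)" "symp n w (vadd z1 z2)"
        using F1 False z1 z2 u w by (simp_all add: symp_vadd_right)
      then show ?thesis using z1 z2 by (intro that[of "vadd z1 z2"]) simp_all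
    qed
  qed
  show ?thesis using cnt_symp[OF u(1) z(1) z(2)] cnt_symp[OF w(1) z(1) z(3)] by simp
qed



lemma card_filter_sum: "finite A \<Longrightarrow> card {x \<in> A. P x} = (\<Sum>x\<in>A. if P x then 1 else (0::nat))"
  by (simp add: sum.If_cases Int_def)

lemma vecs_eq: "vecs m = {xs. set xs \<subseteq> UNIV \<and> length xs = m}"
  by (auto simp: vecs_def)

lemma finite_vecs[simp]: "finite (vecs m)"
  unfolding vecs_eq by (rule finite_lists_length_eq) simp

lemma card_vecs: "card (vecs m) = 2^m"
  unfolding vecs_eq by (subst card_lists_length_eq) (simp_all add: card_UNIV_bool)

lemma finite_mats: "finite (mats m c)"
proof -
  have "mats m c = {M. set M \<subseteq> vecs m \<and> length M = c}" by (auto simp: mats_def)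
  then show ?thesis by (simp add: finite_lists_length_eq)
qed

lemma finite_L: "finite (lsn_instances n k)"
  by (rule finite_subset[of _ "mats (2*n) n \<times> mats (2*n) k"])
     (auto simp: lsn_instances_def finite_mats)

lemma card_Sb: "card (Sb n k I) \<le> 2^(n+k)"
proof -
  have "Sb n k I \<subseteq> (\<lambda>(u,v). mat_vec (2*n) (fst I @ snd I) (u@v)) ` (vecs n \<times> vecs k)"
    unfolding Sb_def by auto
  then have "card (Sb n k I) \<le> card ((\<lambda>(u,v). mat_vec (2*n) (fst I @ snd I) (u@v)) ` (vecs n \<times> vecs k))"
    by (intro card_mono) auto
  also have "\<dots> \<le> card (vecs n \<times> vecs k)" by (rule card_image_le) simp
  also have "\<dots> = 2^(n+k)" by (simp add: card_cartesian_product card_vecs power_add)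
  finally show ?thesis .
qed

lemma sum_cnt: "(\<Sum>w\<in>vecs (2*n). cnt n k w) = (\<Sum>I\<in>lsn_instances n k. card (Sb n k I))"
proof -
  let ?L = "lsn_instances n k"
  have "(\<Sum>w\<in>vecs (2*n). cnt n k w) = (\<Sum>w\<in>vecs (2*n). \<Sum>I\<in>?L. if w \<in> Sb n k I then 1 else (0::nat))"
    unfolding cnt_def by (simp add: card_filter_sum finite_L)
  also have "\<dots> = (\<Sum>I\<in>?L. \<Sum>w\<in>vecs (2*n). if w \<in> Sb n k I then 1 else (0::nat))"
    by (rule sum.swap)
  also have "\<dots> = (\<Sum>I\<in>?L. card {w \<in> vecs (2*n). w \<in> Sb n k I})"
    by (intro sum.cong refl) (rule card_filter_sum[symmetric], rule finite_vecs)
  also have "\<dots> = (\<Sum>I\<in>?L. card (Sb n k I))"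
    by (intro sum.cong refl arg_cong[where f=card]) (use Sb_subset in blast)
  finally show ?thesis .
qed

lemma cnt_bound:
  assumes w: "length w = 2*n" "w \<noteq> zerovec (2*n)"
  shows "cnt n k w * (4^n - 1) \<le> card (lsn_instances n k) * 2^(n+k)"
proof -
  let ?V = "vecs (2*n) - {zerovec (2*n)}"
  have cV: "card ?V = 4^n - 1"
    by (simp add: card_vecs power_mult)
  have "cnt n k w * (4^n - 1) = (\<Sum>w'\<in>?V. cnt n k w')"
    using cnt_eq[OF _ _ w, of _ k] cV by (simp add: mult.commute)
  also have "\<dots> \<le> (\<Sum>w'\<in>vecs (2*n). cnt n k w')"
    by (rule sum_mono2) auto
  also have "\<dots> = (\<Sum>I\<in>lsn_instances n k. card (Sb n k I))" by (rule sum_cnt)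
  also have "\<dots> \<le> (\<Sum>I\<in>lsn_instances n k. 2^(n+k))" by (intro sum_mono card_Sb)
  also have "\<dots> = card (lsn_instances n k) * 2^(n+k)" by simp
  finally show ?thesis .
qed

definition LowW :: "nat \<Rightarrow> real \<Rightarrow> vec set" where
  "LowW n d = {w \<in> vecs (2*n). w \<noteq> zerovec (2*n) \<and> real (weight n w) \<le> d}"

definition bad :: "nat \<Rightarrow> nat \<Rightarrow> real \<Rightarrow> inst \<Rightarrow> bool" where
  "bad n k d I = (\<exists>w\<in>LowW n d. w \<in> Sb n k I)"

lemma prob_bad:
  assumes ne: "lsn_instances n k \<noteq> {}" and n: "n > 0"
  shows "measure (Gen n k) {I. bad n k d I} \<le> real (card (LowW n d)) * 2^(n+k) / (4^n - 1)"
proof -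
  let ?L = "lsn_instances n k"
  have fL: "finite ?L" by (rule finite_L)
  have cL: "card ?L > 0" using ne fL by (simp add: card_gt_0_iff)
  have q: "(4::real)^n - 1 > 0" using n by (simp add: one_less_power)
  have "?L \<inter> {I. bad n k d I} = (\<Union>w\<in>LowW n d. {I \<in> ?L. w \<in> Sb n k I})"
    unfolding bad_def by auto
  moreover have "card (\<Union>w\<in>LowW n d. {I \<in> ?L. w \<in> Sb n k I}) \<le> (\<Sum>w\<in>LowW n d. card {I \<in> ?L. w \<in> Sb n k I})"
    by (rule card_UN_le) (rule finite_subset[OF _ finite_vecs[of "2*n"]], auto simp: LowW_def)
  ultimately have "card (?L \<inter> {I. bad n k d I}) \<le> (\<Sum>w\<in>LowW n d. cnt n k w)"
    unfolding cnt_def by simp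
  then have "real (card (?L \<inter> {I. bad n k d I})) \<le> (\<Sum>w\<in>LowW n d. real (cnt n k w))"
    by (metis of_nat_le_iff of_nat_sum)
  also have "\<dots> \<le> (\<Sum>w\<in>LowW n d. real (card ?L) * 2^(n+k) / (4^n - 1))"
  proof (intro sum_mono)
    fix w assume "w \<in> LowW n d"
    then have "length w = 2*n" "w \<noteq> zerovec (2*n)" by (auto simp: LowW_def)
    from cnt_bound[OF this, of k] have "real (cnt n k w * (4^n - 1)) \<le> real (card ?L * 2^(n+k))"
      by linarith
    moreover have "real (4^n - 1 :: nat) = 4^n - 1" using n by (simp add: of_nat_diff)
    ultimately have "real (cnt n k w) * (4^n - 1) \<le> real (card ?L) * 2^(n+k)"
      by (metis of_nat_mult of_nat_numeral of_nat_power)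
    then show "real (cnt n k w) \<le> real (card ?L) * 2^(n+k) / (4^n - 1)"
      using q by (simp add: field_simps)
  qed
  also have "\<dots> = real (card (LowW n d)) * (real (card ?L) * 2^(n+k) / (4^n - 1))" by simp
  finally have "real (card (?L \<inter> {I. bad n k d I})) / card ?L \<le> real (card (LowW n d)) * 2^(n+k) / (4^n - 1)"
    using cL by (simp add: field_simps)
  then show ?thesis unfolding Gen_def using ne fL by (simp add: measure_pmf_of_set)
qed



definition pv :: "(bool \<times> bool) list \<Rightarrow> vec" where
  "pv ps = map fst ps @ map snd ps"

definition nzc :: "(bool \<times> bool) list \<Rightarrow> nat" where
  "nzc ps = length (filter (\<lambda>q. q \<noteq> (False,False)) ps)"

lemma weight_pv: "length ps = n \<Longrightarrow> weight n (pv ps) = nzc ps"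
proof -
  assume l: "length ps = n"
  have "{j. j < n \<and> (pv ps ! j \<or> pv ps ! (n + j))} = {i. i < length ps \<and> ps!i \<noteq> (False,False)}"
  proof -
    have "\<And>j. j < n \<Longrightarrow> pv ps ! j = fst (ps!j) \<and> pv ps ! (n+j) = snd (ps!j)"
      using l by (simp add: pv_def nth_append)
    then show ?thesis using l by (auto, metis prod.collapse)
  qed
  then show ?thesis unfolding weight_def nzc_def by (simp add: length_filter_conv_card)
qed

lemma length_pv: "length (pv ps) = 2 * length ps" by (simp add: pv_def)

lemma vecs_pv: "vecs (2*n) = pv ` {ps. length ps = n}"
proof
  show "vecs (2*n) \<subseteq> pv ` {ps. length ps = n}"
  proof
    fix w assume "w \<in> vecs (2*n)"
    then have l: "length w = 2*n" by simp
    let ?ps = "zip (take n w) (drop n w)"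
    have "pv ?ps = w" using l by (simp add: pv_def)
    moreover have "length ?ps = n" using l by simp
    ultimately show "w \<in> pv ` {ps. length ps = n}" by (metis (mono_tags) image_eqI mem_Collect_eq)
  qed
qed (auto simp: length_pv)

lemma inj_pv: "inj_on pv {ps. length ps = n}"
proof (rule inj_onI)
  fix ps qs assume h: "ps \<in> {ps. length ps = n}" "qs \<in> {ps. length ps = n}" "pv ps = pv qs"
  then have "map fst ps = map fst qs" "map snd ps = map snd qs" by (auto simp: pv_def)
  then show "ps = qs" by (metis zip_map_fst_snd)
qed

lemma lists_Suc: "{ps. length ps = Suc n} = (\<lambda>(a,ps). a#ps) ` (UNIV \<times> {ps. length ps = n})"
  by (auto simp: length_Suc_conv)

lemma sum_lists_prod:
  fixes f :: "'a::finite \<Rightarrow> real"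
  shows "(\<Sum>ps\<in>{ps. length ps = n}. prod_list (map f ps)) = (\<Sum>a\<in>UNIV. f a)^n"
proof (induction n)
  case 0 then show ?case by simp
next
  case (Suc n)
  have inj: "inj_on (\<lambda>(a,ps). a#ps) (UNIV \<times> {ps. length ps = n})"
    by (auto intro: inj_onI)
  have fin: "finite {ps::'a list. length ps = n}"
    using finite_lists_length_eq[of "UNIV::'a set" n] by simp
  have "(\<Sum>ps\<in>{ps. length ps = Suc n}. prod_list (map f ps))
      = (\<Sum>q\<in>UNIV \<times> {ps. length ps = n}. prod_list (map f ((\<lambda>(a,ps). a#ps) q)))"
    unfolding lists_Suc by (rule sum.reindex[OF inj, unfolded comp_def])
  also have "\<dots> = (\<Sum>(a,ps)\<in>UNIV \<times> {ps. length ps = n}. f a * prod_list (map f ps))"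
    by (intro sum.cong refl) auto
  also have "\<dots> = (\<Sum>a\<in>UNIV. \<Sum>ps\<in>{ps. length ps = n}. f a * prod_list (map f ps))"
    by (rule sum.cartesian_product[symmetric])
  also have "\<dots> = (\<Sum>a\<in>UNIV. f a) * (\<Sum>ps\<in>{ps. length ps = n}. prod_list (map f ps))"
    by (rule sum_product[symmetric])
  finally show ?case using Suc by simp
qed

definition nzf :: "real \<Rightarrow> bool \<times> bool \<Rightarrow> real" where
  "nzf x a = (if a = (False,False) then 1 else x)"

lemma pow_nzc: "x ^ nzc ps = prod_list (map (nzf x) ps)"
  by (induction ps) (auto simp: nzc_def nzf_def)

lemma UNIV_pairs: "(UNIV :: (bool \<times> bool) set) = {(False,False),(False,True),(True,False),(True,True)}"
  by auto

lemma gen_sum: "(\<Sum>w\<in>vecs (2*n). (x::real) ^ weight n w) = (1 + 3*x)^n"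
proof -
  have "(\<Sum>w\<in>vecs (2*n). x ^ weight n w) = (\<Sum>ps\<in>{ps. length ps = n}. x ^ weight n (pv ps))"
    unfolding vecs_pv by (rule sum.reindex[OF inj_pv, unfolded comp_def])
  also have "\<dots> = (\<Sum>ps\<in>{ps. length ps = n}. prod_list (map (nzf x) ps))"
    by (intro sum.cong refl) (simp add: weight_pv pow_nzc)
  also have "\<dots> = (\<Sum>a\<in>UNIV. nzf x a)^n" by (rule sum_lists_prod)
  also have "(\<Sum>a\<in>UNIV. nzf x a) = 1 + 3*x" by (simp add: UNIV_pairs nzf_def)
  finally show ?thesis .
qed

lemma card_LowW:
  assumes x: "0 < x" "x \<le> 1"
  shows "real (card (LowW n d)) \<le> x powr (-d) * (1 + 3*x)^n"
proof -
  have fin: "finite (LowW n d)" by (rule finite_subset[OF _ finite_vecs[of "2*n"]]) (auto simp: LowW_def)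
  have "real (card (LowW n d)) = (\<Sum>w\<in>LowW n d. 1)" by simp
  also have "\<dots> \<le> (\<Sum>w\<in>LowW n d. x powr (real (weight n w) - d))"
  proof (intro sum_mono)
    fix w assume "w \<in> LowW n d"
    then have "real (weight n w) - d \<le> 0" by (simp add: LowW_def)
    then have a: "x powr (d - real (weight n w)) \<le> 1 powr (d - real (weight n w))"
      using x by (intro powr_mono2) auto
    have b: "0 < x powr (d - real (weight n w))" using x by simp
    have "x powr (real (weight n w) - d) = 1 / x powr (d - real (weight n w))"
      using x by (metis minus_diff_eq powr_minus_divide)
    then show "1 \<le> x powr (real (weight n w) - d)"
      using a b by simp
  qed
  also have "\<dots> \<le> (\<Sum>w\<in>vecs (2*n). x powr (real (weight n w) - d))"
    by (rule sum_mono2) (auto simp: LowW_def)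
  also have "\<dots> = (\<Sum>w\<in>vecs (2*n). x powr (-d) * x ^ weight n w)"
    using x by (intro sum.cong refl) (simp add: powr_diff powr_minus_divide powr_realpow divide_simps)
  also have "\<dots> = x powr (-d) * (1 + 3*x)^n"
    by (simp add: sum_distrib_left[symmetric] gen_sum)
  finally show ?thesis .
qed



lemma set_noise_pairs: "set_pmf (noise_pairs p n) \<subseteq> {ps. length ps = n}"
  by (induction n) auto

lemma pmf_noise_pairs:
  assumes p: "0 \<le> p" "p \<le> 1"
  shows "length ps = n \<Longrightarrow> pmf (noise_pairs p n) ps = prod_list (map (pmf (pauli_pmf p)) ps)"
proof (induction n arbitrary: ps)
  case 0 then show ?case by simp
next
  case (Suc n)
  then obtain a qs where ps: "ps = a#qs" and l: "length qs = n" by (cases ps) auto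
  have inner: "pmf (map_pmf (\<lambda>xs. x # xs) (noise_pairs p n)) (a#qs) = (if x = a then pmf (noise_pairs p n) qs else 0)" for x
  proof (cases "x = a")
    case True then show ?thesis by (simp add: pmf_map_inj' inj_on_def)
  next
    case False then show ?thesis by (intro trans[OF pmf_map_outside]) auto
  qed
  have "pmf (noise_pairs p (Suc n)) ps = (\<integral>x. (if x = a then pmf (noise_pairs p n) qs else 0) \<partial>measure_pmf (pauli_pmf p))"
    unfolding ps by (simp add: pmf_bind inner)
  also have "\<dots> = (\<Sum>x\<in>{a}. (if x = a then pmf (noise_pairs p n) qs else 0) * pmf (pauli_pmf p) x)"
    by (rule integral_measure_pmf_real) (auto split: if_splits)
  also have "\<dots> = pmf (pauli_pmf p) a * pmf (noise_pairs p n) qs" by simp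
  finally show ?case using Suc.IH[OF l] ps by simp
qed

lemma pauli_FF:
  assumes p: "0 \<le> p" "p \<le> 1"
  shows "pmf (pauli_pmf p) (False,False) = 1 - p"
  unfolding pauli_pmf_def using p by (simp add: pmf_bind)

lemma pauli_sum:
  assumes p: "0 \<le> p" "p \<le> 1"
  shows "(\<Sum>a\<in>UNIV. nzf y a * pmf (pauli_pmf p) a) = 1 - p + p * y"
proof -
  have s: "(\<Sum>a\<in>UNIV. pmf (pauli_pmf p) a) = 1" by (rule sum_pmf_eq_1) auto
  have "(\<Sum>a\<in>UNIV. nzf y a * pmf (pauli_pmf p) a)
     = pmf (pauli_pmf p) (False,False) + y * (pmf (pauli_pmf p) (False,True) + pmf (pauli_pmf p) (True,False) + pmf (pauli_pmf p) (True,True))"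
    by (simp add: UNIV_pairs nzf_def algebra_simps)
  moreover have "pmf (pauli_pmf p) (False,True) + pmf (pauli_pmf p) (True,False) + pmf (pauli_pmf p) (True,True) = p"
    using s pauli_FF[OF p] by (simp add: UNIV_pairs)
  ultimately show ?thesis using pauli_FF[OF p] by simp
qed

lemma prod_list_mult: "prod_list (map f xs) * prod_list (map g xs) = prod_list (map (\<lambda>a. (f a::real) * g a) xs)"
  by (induction xs) (auto simp: algebra_simps)

lemma noise_expect:
  "measure_pmf.expectation (noise p n) (g :: vec \<Rightarrow> real) = (\<Sum>ps\<in>{ps. length ps = n}. g (pv ps) * pmf (noise_pairs p n) ps)"
proof -
  have "measure_pmf.expectation (noise p n) g = measure_pmf.expectation (noise_pairs p n) (\<lambda>ps. g (pv ps))"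
    unfolding noise_def pv_def by simp
  also have "\<dots> = (\<Sum>ps\<in>{ps. length ps = n}. g (pv ps) * pmf (noise_pairs p n) ps)"
    by (rule integral_measure_pmf_real) (use set_noise_pairs finite_lists_length_eq[of "UNIV::(bool\<times>bool) set" n] in auto)
  finally show ?thesis .
qed

lemma set_noise: "set_pmf (noise p n) \<subseteq> vecs (2*n)"
  unfolding noise_def using set_noise_pairs[of p n] by (auto simp: vecs_pv pv_def)

lemma heavy_bound:
  assumes p: "0 \<le> p" "p \<le> 1"
  shows "measure (noise p n) {e. real (weight n e) > t} \<le> 2 powr (-t) * (1 + p)^n"
proof -
  let ?H = "{e. real (weight n e) > t}"
  have "measure (noise p n) ?H = measure_pmf.expectation (noise p n) (indicator ?H)" by simp
  also have "\<dots> = (\<Sum>ps\<in>{ps. length ps = n}. indicator ?H (pv ps) * pmf (noise_pairs p n) ps)"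
    by (rule noise_expect)
  also have "\<dots> \<le> (\<Sum>ps\<in>{ps. length ps = n}. (2 powr (-t) * 2 ^ weight n (pv ps)) * pmf (noise_pairs p n) ps)"
  proof (intro sum_mono mult_right_mono)
    fix ps
    show "indicator ?H (pv ps) \<le> 2 powr (-t) * 2 ^ weight n (pv ps)"
    proof (cases "pv ps \<in> ?H")
      case True
      then have "0 \<le> real (weight n (pv ps)) - t" by simp
      then have "1 \<le> (2::real) powr (real (weight n (pv ps)) - t)" by (intro ge_one_powr_ge_zero) auto
      also have "\<dots> = 2 powr (-t) * 2 ^ weight n (pv ps)"
        by (simp add: powr_diff powr_minus_divide powr_realpow divide_simps)
      finally show ?thesis using True by simp
    qed simp
  qed simp
  also have "\<dots> = 2 powr (-t) * (\<Sum>ps\<in>{ps. length ps = n}. prod_list (map (\<lambda>a. nzf 2 a * pmf (pauli_pmf p) a) ps))"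
    by (simp add: sum_distrib_left weight_pv pow_nzc pmf_noise_pairs[OF p] prod_list_mult mult.assoc)
  also have "\<dots> = 2 powr (-t) * (1 + p)^n"
    by (simp add: sum_lists_prod pauli_sum[OF p]) (simp add: add.commute)
  finally show ?thesis .
qed

lemma one_plus_pow: "0 \<le> (p::real) \<Longrightarrow> (1 + p)^n \<le> 2 powr (2 * p * n)"
proof -
  assume p: "0 \<le> p"
  have "(1 + p)^n \<le> (exp p)^n" using p by (intro power_mono) (auto simp: add.commute)
  also have "\<dots> = exp (p * n)" by (simp add: exp_of_nat_mult[symmetric] mult.commute)
  also have "\<dots> \<le> exp (p * n * ln 4)"
  proof -
    have "exp 1 \<le> (4::real)" using exp_le by simp
    then have "ln (exp 1) \<le> ln (4::real)" by (subst ln_le_cancel_iff) auto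
    then have "1 \<le> ln (4::real)" by simp
    then show ?thesis using p by (intro exp_mono) (simp add: mult_left_mono[of 1 "ln 4" "p*n", simplified])
  qed
  also have "\<dots> = 4 powr (p * n)" by (simp add: powr_def mult.commute)
  also have "\<dots> = 2 powr (2 * p * n)"
  proof -
    have "(4::real) = 2 powr 2" by simp
    then have "(4::real) powr (p*n) = (2 powr 2) powr (p*n)" by simp
    also have "\<dots> = 2 powr (2 * p * n)" by (subst powr_powr) (simp add: mult.assoc)
    finally show ?thesis .
  qed
  finally show ?thesis .
qed



lemma log3_ge: "log 2 (3::real) \<ge> 10/7"
proof -
  have a: "log 2 ((3::real)^7) = 7 * log 2 3" by (subst log_nat_power) auto
  have b: "log 2 ((2::real)^10) = 10" by (subst log_nat_power) auto
  have c: "log 2 ((2::real)^10) \<le> log 2 (3^7)" by (subst log_le_cancel_iff) auto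
  from a b c show ?thesis by simp
qed

lemma H2_nonneg: "0 < x \<Longrightarrow> x < 1 \<Longrightarrow> H2 x \<ge> 0"
proof -
  assume x: "0 < x" "x < 1"
  have "log 2 x < 0" "log 2 (1 - x) < 0" using x by auto
  then have "- x * log 2 x \<ge> 0" "- (1 - x) * log 2 (1 - x) \<ge> 0"
    using x by (auto simp: mult_nonneg_nonpos mult_nonpos_nonpos)
  then show ?thesis unfolding H2_def by linarith
qed

lemma delta_small:
  assumes d: "0 < \<delta>" "\<delta> < 1" and h: "H2 \<delta> + \<delta> * log 2 3 < 1 - r" and r: "0 \<le> r"
  shows "\<delta> \<le> 7/10"
proof (rule ccontr)
  assume "\<not> \<delta> \<le> 7/10"
  then have "\<delta> * log 2 3 \<ge> 7/10 * (10/7)" using log3_ge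
    by (intro mult_mono) auto
  then show False using H2_nonneg[OF d] h r by simp
qed

lemma entropy_identity:
  assumes d: "0 < \<delta>" "\<delta> < 1"
  defines "x \<equiv> \<delta> / (3 * (1 - \<delta>))"
  shows "x powr (- (\<delta> * n)) * (1 + 3*x)^n = 2 powr (n * (H2 \<delta> + \<delta> * log 2 3))"
proof -
  have x: "0 < x" using d by (simp add: x_def)
  have ox: "1 + 3*x = 1 / (1 - \<delta>)" using d by (simp add: x_def field_simps)
  have l1: "log 2 x = log 2 \<delta> - log 2 (3 * (1 - \<delta>))"
    unfolding x_def by (rule log_divide_pos) (use d in auto)
  have l2: "log 2 (3 * (1 - \<delta>)) = log 2 3 + log 2 (1 - \<delta>)"
    by (rule log_mult_pos) (use d in auto)
  have lx: "log 2 x = log 2 \<delta> - log 2 3 - log 2 (1 - \<delta>)"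
    using l1 l2 by simp
  have lox: "log 2 (1 + 3*x) = - log 2 (1 - \<delta>)"
    using d unfolding ox by (simp add: log_divide)
  have pos: "0 < x powr (- (\<delta> * n)) * (1 + 3*x)^n" using x by simp
  have "log 2 (x powr (- (\<delta> * n)) * (1 + 3*x)^n) = - (\<delta> * n) * log 2 x + n * log 2 (1 + 3*x)"
    using x by (simp add: log_mult log_powr log_nat_power)
  also have "\<dots> = n * (H2 \<delta> + \<delta> * log 2 3)"
    unfolding lx lox H2_def by (simp add: algebra_simps)
  finally have "log 2 (x powr (- (\<delta> * n)) * (1 + 3*x)^n) = n * (H2 \<delta> + \<delta> * log 2 3)" .
  then have "2 powr (log 2 (x powr (- (\<delta> * n)) * (1 + 3*x)^n)) = 2 powr (n * (H2 \<delta> + \<delta> * log 2 3))" by simp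
  then show ?thesis using pos by simp
qed

lemma seven_ninths: "s \<ge> 0 \<Longrightarrow> (7/9::real) powr s \<le> 2 powr (- s / 4)"
proof -
  assume s: "s \<ge> 0"
  have "(2 powr (-1/4::real))^4 = (2 powr (-1/4::real)) powr (real 4)"
    by (rule powr_realpow[symmetric]) simp
  also have "\<dots> = 2 powr (-1)" by (simp add: powr_powr)
  also have "\<dots> = 1/2" by (simp add: powr_minus)
  finally have t4: "(2 powr (-1/4::real))^4 = 1/2" .
  have e4: "Suc 3 = (4::nat)" by simp
  have h: "(7/9::real)^4 \<le> 1/2" by (simp add: power_divide)
  have "(7/9::real)^4 \<le> (2 powr (-1/4))^4" unfolding t4 by (rule h)
  then have "(7/9::real)^Suc 3 \<le> (2 powr (-1/4))^Suc 3" unfolding e4 .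
  then have "(7/9::real) \<le> 2 powr (-1/4)" by (rule power_le_imp_le_base) auto
  then have "(7/9::real) powr s \<le> (2 powr (-1/4)) powr s" using s by (intro powr_mono2) auto
  also have "\<dots> = 2 powr (- s / 4)" by (simp add: powr_powr)
  finally show ?thesis .
qed

lemma bad_bound:
  assumes n: "n > 0" and ne: "lsn_instances n k \<noteq> {}"
    and d: "0 < 4.03 * p" "4.03 * p < 1"
    and h: "H2 (4.03 * p) + 4.03 * p * log 2 3 < 1 - real k / real n"
  shows "measure (Gen n k) {I. bad n k (4.02 * real n * p) I} \<le> 2 * 2 powr (- (p * n) / 400)"
proof -
  define \<delta> where "\<delta> = 4.03 * p"
  have dd: "0 < \<delta>" "\<delta> < 1" using d by (auto simp: \<delta>_def)
  have p: "0 < p" using d by simp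
  have hk: "H2 \<delta> + \<delta> * log 2 3 < 1 - real k / real n" using h by (simp add: \<delta>_def)
  have ds: "\<delta> \<le> 7/10" using delta_small[OF dd hk] n by simp
  define x where "x = \<delta> / (3 * (1 - \<delta>))"
  have x0: "0 < x" using dd by (simp add: x_def)
  have x1: "x \<le> 7/9" using dd ds unfolding x_def by (simp add: field_simps)
  have c1: "real (card (LowW n (4.02 * real n * p))) \<le> x powr (- (4.02 * real n * p)) * (1 + 3*x)^n"
    by (rule card_LowW) (use x0 x1 in auto)
  have "x powr (- (4.02 * real n * p)) = x powr (- (\<delta> * n)) * x powr (p * n / 100)"
    by (simp add: powr_add[symmetric] \<delta>_def algebra_simps)
  then have c2: "x powr (- (4.02 * real n * p)) * (1 + 3*x)^n = 2 powr (n * (H2 \<delta> + \<delta> * log 2 3)) * x powr (p * n / 100)"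
    using entropy_identity[OF dd, of n] unfolding x_def[symmetric] by (simp add: algebra_simps)
  have "n * (H2 \<delta> + \<delta> * log 2 3) \<le> n * (1 - real k / real n)"
    using hk n by (intro mult_left_mono) auto
  also have "\<dots> = real n - real k" using n by (simp add: field_simps)
  finally have c3: "2 powr (n * (H2 \<delta> + \<delta> * log 2 3)) \<le> 2 powr (real n - real k)" by simp
  have c4: "x powr (p * n / 100) \<le> 2 powr (- (p * n) / 400)"
  proof -
    have "x powr (p * n / 100) \<le> (7/9) powr (p * n / 100)" using x0 x1 p by (intro powr_mono2) auto
    also have "\<dots> \<le> 2 powr (- (p * n / 100) / 4)" using p by (intro seven_ninths) auto
    finally show ?thesis by simp
  qed
  have cw: "real (card (LowW n (4.02 * real n * p))) \<le> 2 powr (real n - real k) * 2 powr (- (p * n) / 400)"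
  proof -
    have "2 powr (n * (H2 \<delta> + \<delta> * log 2 3)) * x powr (p * n / 100) \<le> 2 powr (real n - real k) * 2 powr (- (p * n) / 400)"
      using c3 c4 by (intro mult_mono) auto
    then show ?thesis using c1 c2 by linarith
  qed
  have q: "(4::real)^n - 1 > 0" using n by (simp add: one_less_power)
  have e: "2 powr (real n - real k) * 2^(n+k) = (4::real)^n"
  proof -
    have "2 powr (real n - real k) * 2^(n+k) = (2^n / 2^k) * (2^n * 2^k :: real)"
      by (simp add: powr_diff powr_realpow power_add)
    also have "\<dots> = 2^n * 2^n" by simp
    also have "\<dots> = (4::real)^n" by (simp add: power_mult_distrib[symmetric])
    finally show ?thesis .
  qed
  have "measure (Gen n k) {I. bad n k (4.02 * real n * p) I} \<le> real (card (LowW n (4.02 * real n * p))) * 2^(n+k) / (4^n - 1)"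
    by (rule prob_bad[OF ne n])
  also have "\<dots> \<le> 2 powr (real n - real k) * 2 powr (- (p * n) / 400) * 2^(n+k) / (4^n - 1)"
    using cw q by (intro divide_right_mono mult_right_mono) auto
  also have "\<dots> = 2 powr (- (p * n) / 400) * (4^n / (4^n - 1))"
    using e by (simp add: field_simps)
  also have "\<dots> \<le> 2 powr (- (p * n) / 400) * 2"
  proof (intro mult_left_mono)
    have "(4::real)^1 \<le> 4^n" using n by (intro power_increasing) auto
    then have "(4::real)^n \<ge> 4" by simp
    then show "(4::real)^n / (4^n - 1) \<le> 2" using q by (simp add: field_simps)
  qed simp
  finally show ?thesis by simp
qed



lemma dotp_unit_list: "j < m \<Longrightarrow> length x = m \<Longrightarrow> dotp (map (\<lambda>i. i = j) [0..<m]) x = x!j"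
proof -
  assume h: "j < m" "length x = m"
  have "{i. i < length (map (\<lambda>i. i = j) [0..<m]) \<and> i < length x \<and> map (\<lambda>i. i = j) [0..<m] ! i \<and> x!i} = (if x!j then {j} else {})"
    using h by auto
  then show ?thesis unfolding dotp_card by simp
qed

lemma L_nonempty:
  assumes kn: "k \<le> n"
  shows "lsn_instances n k \<noteq> {}"
proof -
  let ?A = "map (unitv (2*n)) [0..<n]" and ?B = "map (unitv (2*n)) [n..<n+k]"
  have mA: "?A \<in> mats (2*n) n" and mB: "?B \<in> mats (2*n) k" by (auto simp: mats_def)
  have iA: "isotropic n ?A"
  proof -
    have "\<not> symp n (unitv (2*n) i) (unitv (2*n) j)" if "i < n" "j < n" for i j
    proof -
      have "dotp (take n (unitv (2*n) i)) (drop n (unitv (2*n) j)) = False"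
        using that by (intro dotp_false) auto
      moreover have "dotp (take n (unitv (2*n) j)) (drop n (unitv (2*n) i)) = False"
        using that by (intro dotp_false) auto
      ultimately show ?thesis unfolding symp_def by simp
    qed
    then show ?thesis unfolding isotropic_def by auto
  qed
  have iB: "isotropic n ?B"
  proof -
    have "\<not> symp n (unitv (2*n) i) (unitv (2*n) j)" if "n \<le> i" "n \<le> j" for i j
    proof -
      have "dotp (take n (unitv (2*n) i)) (drop n (unitv (2*n) j)) = False"
        using that by (subst dotp_comm, intro dotp_false) auto
      moreover have "dotp (take n (unitv (2*n) j)) (drop n (unitv (2*n) i)) = False"
        using that by (subst dotp_comm, intro dotp_false) auto
      ultimately show ?thesis unfolding symp_def by simp
    qed
    then show ?thesis unfolding isotropic_def by auto
  qed
  have ci: "col_indep (2*n) (?A @ ?B)"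
    unfolding col_indep_def
  proof (intro allI impI)
    fix x assume h: "length x = length (?A @ ?B) \<and> mat_vec (2*n) (?A @ ?B) x = zerovec (2*n)"
    have AB: "?A @ ?B = map (unitv (2*n)) [0..<n+k]"
      by (simp add: upt_add_eq_append[of 0 n k] del: upt_add_eq_append)
    have lx: "length x = n + k" using h by simp
    have "x ! j = False" if j: "j < n + k" for j
    proof -
      have j2: "j < 2*n" using j kn by simp
      have "mat_vec (2*n) (?A @ ?B) x ! j = dotp (map (\<lambda>c. c!j) (map (unitv (2*n)) [0..<n+k])) x"
        unfolding AB by (rule mat_vec_nth) (use j2 in auto)
      also have "map (\<lambda>c. c!j) (map (unitv (2*n)) [0..<n+k]) = map (\<lambda>i. i = j) [0..<n+k]"
        using j2 by auto
      also have "dotp (map (\<lambda>i. i = j) [0..<n+k]) x = x!j" by (rule dotp_unit_list) (use j lx in auto)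
      finally show ?thesis using h j2 by simp
    qed
    then show "x = zerovec (length (?A @ ?B))" using lx by (intro vec_eqI) auto
  qed
  have "(?A, ?B) \<in> lsn_instances n k" using mA mB iA iB ci by (simp add: lsn_instances_def)
  then show ?thesis by blast
qed

lemma weight_vadd: "length e = 2*n \<Longrightarrow> length e' = 2*n \<Longrightarrow> weight n (vadd e e') \<le> weight n e + weight n e'"
proof -
  assume l: "length e = 2*n" "length e' = 2*n"
  have "{j. j < n \<and> (vadd e e' ! j \<or> vadd e e' ! (n + j))} \<subseteq>
        {j. j < n \<and> (e ! j \<or> e ! (n + j))} \<union> {j. j < n \<and> (e' ! j \<or> e' ! (n + j))}"
    using l by auto
  then have "weight n (vadd e e') \<le> card ({j. j < n \<and> (e ! j \<or> e ! (n + j))} \<union> {j. j < n \<and> (e' ! j \<or> e' ! (n + j))})"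
    unfolding weight_def by (intro card_mono) auto
  also have "\<dots> \<le> weight n e + weight n e'" unfolding weight_def by (rule card_Un_le)
  finally show ?thesis .
qed

lemma unique_y:
  assumes I: "I \<in> lsn_instances n k" and nb: "\<not> bad n k (4.02 * real n * p) I"
    and r: "length r = n" and y: "length y = k" and e: "length e = 2*n"
    and we: "real (weight n e) \<le> 2.01 * real n * p"
    and dom: "(r', y', e') \<in> dom_set n k p"
    and eq: "encode n I r' y' e' = encode n I r y e"
  shows "y' = y"
proof (rule ccontr)
  assume ne: "y' \<noteq> y"
  obtain A B where AB: "I = (A,B)" by (cases I)
  have cA: "\<forall>c\<in>set A. length c = 2*n" and cB: "\<forall>c\<in>set B. length c = 2*n"
    and lA: "length A = n" and lB: "length B = k" and ci: "col_indep (2*n) (A@B)"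
    using I AB by (auto simp: lsn_instances_def mats_def)
  have r': "length r' = n" and y': "length y' = k" and e': "length e' = 2*n"
    and we': "real (weight n e') \<le> 2.01 * real n * p"
    using dom by (auto simp: dom_set_def Wset_def)
  define u where "u = vadd r r'"
  define v where "v = vadd y y'"
  define w where "w = vadd e e'"
  have lu: "length u = n" and lv: "length v = k" and lw: "length w = 2*n"
    using r r' y y' e e' by (auto simp: u_def v_def w_def)
  have m1: "mat_vec (2*n) (A@B) (u@v) = vadd (mat_vec (2*n) A u) (mat_vec (2*n) B v)"
    by (rule mat_vec_append) (use lu lA cA cB in auto)
  have m2: "mat_vec (2*n) A u = vadd (mat_vec (2*n) A r) (mat_vec (2*n) A r')"
    unfolding u_def by (rule mat_vec_vadd) (use r r' lA cA in auto)
  have m3: "mat_vec (2*n) B v = vadd (mat_vec (2*n) B y) (mat_vec (2*n) B y')"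
    unfolding v_def by (rule mat_vec_vadd) (use y y' lB cB in auto)
  have mv: "mat_vec (2*n) (A@B) (u@v) = vadd (vadd (mat_vec (2*n) A r) (mat_vec (2*n) A r'))
                   (vadd (mat_vec (2*n) B y) (mat_vec (2*n) B y'))"
    using m1 m2 m3 by simp
  have key: "mat_vec (2*n) (A@B) (u@v) = w"
  proof (rule vec_eqI)
    have cAB: "\<forall>c\<in>set (A@B). length c = 2*n" using cA cB by auto
    show "length (mat_vec (2*n) (A@B) (u@v)) = length w" using cAB lw by simp
  next
    fix i assume "i < length (mat_vec (2*n) (A@B) (u@v))"
    moreover have cAB: "\<forall>c\<in>set (A@B). length c = 2*n" using cA cB by auto
    ultimately have i: "i < 2*n" by simp
    have "encode n I r' y' e' ! i = encode n I r y e ! i" using eq by simp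
    then show "mat_vec (2*n) (A@B) (u@v) ! i = w ! i"
      unfolding mv using i cA cB e e' by (auto simp: encode_def AB w_def)
  qed
  have vnz: "v \<noteq> zerovec k"
  proof
    assume "v = zerovec k"
    then have h0: "vadd y y' = zerovec k" unfolding v_def .
    have "y = y'"
    proof (rule vec_eqI)
      show "length y = length y'" using y y' by simp
    next
      fix i assume i: "i < length y"
      have "vadd y y' ! i = zerovec k ! i" using h0 by simp
      then show "y ! i = y' ! i" using i y y' by simp
    qed
    then show False using ne by simp
  qed
  have wnz: "w \<noteq> zerovec (2*n)"
  proof
    assume "w = zerovec (2*n)"
    then have "u@v = zerovec (length (A@B))" using ci key lu lv lA lB unfolding col_indep_def by auto
    then have "drop n (u@v) = drop n (zerovec (length (A@B)))" by simp
    then have "v = zerovec k" using lu lv lA lB by (simp add: zerovec_def)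
    then show False using vnz by simp
  qed
  have "real (weight n w) \<le> 4.02 * real n * p"
    using weight_vadd[OF e e'] we we' unfolding w_def by linarith
  then have "w \<in> LowW n (4.02 * real n * p)" using lw wnz by (simp add: LowW_def)
  moreover have "w \<in> Sb n k I" unfolding Sb_def AB using key lu lv vnz
    by (intro image_eqI[of _ _ "(u,v)"]) auto
  ultimately show False using nb unfolding bad_def by blast
qed



lemma pmf_bind_ret: "pmf (bind_pmf M (\<lambda>x. return_pmf (P x))) True = measure_pmf.prob M {x. P x}"
proof -
  have "bind_pmf M (\<lambda>x. return_pmf (P x)) = map_pmf P M" by (simp add: map_pmf_def)
  then show ?thesis by (simp add: pmf_map vimage_def)
qed

lemma E_mono:
  fixes f g :: "'a \<Rightarrow> real"
  shows "finite (set_pmf M) \<Longrightarrow> (\<And>x. x \<in> set_pmf M \<Longrightarrow> f x \<le> g x) \<Longrightarrow>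
   measure_pmf.expectation M f \<le> measure_pmf.expectation M g"
  by (intro integral_mono_AE integrable_measure_pmf_finite AE_pmfI) auto

lemma E_add:
  fixes f g :: "'a \<Rightarrow> real"
  assumes "finite (set_pmf M)"
  shows "measure_pmf.expectation M (\<lambda>x. f x + g x) = measure_pmf.expectation M f + measure_pmf.expectation M g"
  using assms by (intro Bochner_Integration.integral_add integrable_measure_pmf_finite)

lemma E_const: "measure_pmf.expectation M (\<lambda>x. c::real) = c"
  by simp

definition te :: "nat \<Rightarrow> real \<Rightarrow> vec \<Rightarrow> vec" where
  "te n p e = (if real (weight n e) > 2.01 * real n * p then zerovec (2*n) else e)"

lemma invert_expand:
  "invert_success n k p Adv =
   measure_pmf.expectation (Gen n k) (\<lambda>I. measure_pmf.expectation (pmf_of_set (vecs n)) (\<lambda>r.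
     measure_pmf.expectation (pmf_of_set (vecs k)) (\<lambda>y. measure_pmf.expectation (noise p n) (\<lambda>e.
     pmf (bind_pmf (Adv I (fI n I (r, y, te n p e))) (\<lambda>out. return_pmf (out \<in> dom_set n k p \<and> fI n I out = fI n I (r, y, te n p e)))) True))))"
  unfolding invert_success_def Sample_def te_def
  apply (simp only: bind_assoc_pmf bind_return_pmf)
  apply (subst pmf_bind, subst pmf_bind, subst pmf_bind, subst pmf_bind)
  apply (rule refl)
  done

lemma lsn_expand:
  "lsn_success n k p (reduction Adv) =
   measure_pmf.expectation (Gen n k) (\<lambda>I. measure_pmf.expectation (pmf_of_set (vecs n)) (\<lambda>r.
     measure_pmf.expectation (pmf_of_set (vecs k)) (\<lambda>y. measure_pmf.expectation (noise p n) (\<lambda>e.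
     measure_pmf.prob (Adv I (fst I, snd I, encode n I r y e)) {out. fst (snd out) = y}))))"
proof -
  have red: "reduction Adv (fst I, snd I, z) = map_pmf (\<lambda>out. fst (snd out)) (Adv I (fst I, snd I, z))" for I z
  proof -
    have "(\<lambda>(r::vec, y::vec, e::vec). y) = (\<lambda>out. fst (snd out))" by auto
    then show ?thesis unfolding reduction_def by simp
  qed
  show ?thesis
    unfolding lsn_success_def red bind_map_pmf
    apply (subst pmf_bind, subst pmf_bind, subst pmf_bind, subst pmf_bind)
    apply (simp only: pmf_bind_ret)
    done
qed

lemma pointwise:
  assumes I: "I \<in> lsn_instances n k" and r: "length r = n" and y: "length y = k" and e: "length e = 2*n"
  shows "pmf (bind_pmf (Adv I (fI n I (r, y, te n p e))) (\<lambda>out. return_pmf (out \<in> dom_set n k p \<and> fI n I out = fI n I (r, y, te n p e)))) True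
    \<le> measure_pmf.prob (Adv I (fst I, snd I, encode n I r y e)) {out. fst (snd out) = y}
      + indicator {I. bad n k (4.02 * real n * p) I} I + indicator {e. real (weight n e) > 2.01 * real n * p} e"
proof (cases "bad n k (4.02 * real n * p) I \<or> real (weight n e) > 2.01 * real n * p")
  case True
  have "pmf (bind_pmf (Adv I (fI n I (r, y, te n p e))) (\<lambda>out. return_pmf (out \<in> dom_set n k p \<and> fI n I out = fI n I (r, y, te n p e)))) True \<le> 1"
    by (rule pmf_le_1)
  moreover have "1 \<le> indicator {I. bad n k (4.02 * real n * p) I} I + (indicator {e. real (weight n e) > 2.01 * real n * p} e :: real)"
    using True by (auto simp: indicator_def)
  moreover have "0 \<le> measure_pmf.prob (Adv I (fst I, snd I, encode n I r y e)) {out. fst (snd out) = y}" by simp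
  ultimately show ?thesis by linarith
next
  case False
  then have nb: "\<not> bad n k (4.02 * real n * p) I" and we: "real (weight n e) \<le> 2.01 * real n * p" by auto
  have tee: "te n p e = e" using we by (simp add: te_def)
  have fx: "fI n I (r, y, e) = (fst I, snd I, encode n I r y e)" by (simp add: fI_def)
  have "pmf (bind_pmf (Adv I (fI n I (r, y, te n p e))) (\<lambda>out. return_pmf (out \<in> dom_set n k p \<and> fI n I out = fI n I (r, y, te n p e)))) True
      = measure_pmf.prob (Adv I (fst I, snd I, encode n I r y e)) {out. out \<in> dom_set n k p \<and> fI n I out = fI n I (r, y, e)}"
    unfolding tee pmf_bind_ret fx ..
  also have "\<dots> \<le> measure_pmf.prob (Adv I (fst I, snd I, encode n I r y e)) {out. fst (snd out) = y}"
  proof (rule measure_pmf.finite_measure_mono)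
    show "{out. out \<in> dom_set n k p \<and> fI n I out = fI n I (r, y, e)} \<subseteq> {out. fst (snd out) = y}"
    proof
      fix out assume h: "out \<in> {out. out \<in> dom_set n k p \<and> fI n I out = fI n I (r, y, e)}"
      obtain r' y' e' where o: "out = (r', y', e')" by (cases out)
      have d: "(r', y', e') \<in> dom_set n k p" using h o by simp
      have "encode n I r' y' e' = encode n I r y e" using h o by (simp add: fI_def)
      then have "y' = y" using unique_y[OF I nb r y e we d] by simp
      then show "out \<in> {out. fst (snd out) = y}" using o by simp
    qed
  qed simp
  finally show ?thesis using False by simp
qed

lemma main_ineq:
  assumes ne: "lsn_instances n k \<noteq> {}"
  shows "invert_success n k p Adv \<le> lsn_success n k p (reduction Adv)
     + measure (Gen n k) {I. bad n k (4.02 * real n * p) I}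
     + measure (noise p n) {e. real (weight n e) > 2.01 * real n * p}"
proof -
  let ?G = "\<lambda>I r y e. pmf (bind_pmf (Adv I (fI n I (r, y, te n p e))) (\<lambda>out. return_pmf (out \<in> dom_set n k p \<and> fI n I out = fI n I (r, y, te n p e)))) True"
  let ?H = "\<lambda>I r y e. measure_pmf.prob (Adv I (fst I, snd I, encode n I r y e)) {out. fst (snd out) = y}"
  let ?b = "\<lambda>I. indicator {I. bad n k (4.02 * real n * p) I} I :: real"
  let ?h = "\<lambda>e. indicator {e. real (weight n e) > 2.01 * real n * p} e :: real"
  have sG: "set_pmf (Gen n k) = lsn_instances n k" unfolding Gen_def using ne finite_L by simp
  have fG: "finite (set_pmf (Gen n k))" using sG finite_L by simp
  have sV: "set_pmf (pmf_of_set (vecs m)) = vecs m" for m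
  proof (rule set_pmf_of_set)
    have "zerovec m \<in> vecs m" by simp
    then show "vecs m \<noteq> {}" by blast
  qed simp
  have fV: "finite (set_pmf (pmf_of_set (vecs m)))" for m using sV by simp
  have fN: "finite (set_pmf (noise p n))" by (rule finite_subset[OF set_noise]) simp
  have "invert_success n k p Adv = measure_pmf.expectation (Gen n k) (\<lambda>I. measure_pmf.expectation (pmf_of_set (vecs n)) (\<lambda>r.
     measure_pmf.expectation (pmf_of_set (vecs k)) (\<lambda>y. measure_pmf.expectation (noise p n) (\<lambda>e. ?G I r y e))))"
    by (rule invert_expand)
  also have "\<dots> \<le> measure_pmf.expectation (Gen n k) (\<lambda>I. measure_pmf.expectation (pmf_of_set (vecs n)) (\<lambda>r.
     measure_pmf.expectation (pmf_of_set (vecs k)) (\<lambda>y. measure_pmf.expectation (noise p n) (\<lambda>e. ?H I r y e + ?b I + ?h e))))"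
  proof (intro E_mono fG fV fN)
    fix I r y e assume I: "I \<in> set_pmf (Gen n k)" and r: "r \<in> set_pmf (pmf_of_set (vecs n))"
      and y: "y \<in> set_pmf (pmf_of_set (vecs k))" and e: "e \<in> set_pmf (noise p n)"
    show "?G I r y e \<le> ?H I r y e + ?b I + ?h e"
    proof (rule pointwise)
      show "length e = 2*n" using e set_noise[of p n] by auto
    qed (use I r y sG sV in auto)
  qed
  also have "\<dots> = measure_pmf.expectation (Gen n k) (\<lambda>I. measure_pmf.expectation (pmf_of_set (vecs n)) (\<lambda>r.
     measure_pmf.expectation (pmf_of_set (vecs k)) (\<lambda>y. measure_pmf.expectation (noise p n) (\<lambda>e. ?H I r y e))))
     + measure_pmf.expectation (Gen n k) ?b + measure_pmf.expectation (noise p n) ?h"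
    by (simp add: E_add fG fV fN)
  also have "\<dots> = lsn_success n k p (reduction Adv)
     + measure (Gen n k) {I. bad n k (4.02 * real n * p) I}
     + measure (noise p n) {e. real (weight n e) > 2.01 * real n * p}"
    by (simp add: lsn_expand)
  finally show ?thesis .
qed



lemma pow_log_inv: "0 < (x::real) \<Longrightarrow> 2 powr (- (real m * log 2 x)) = 1 / x ^ m"
proof -
  assume x: "0 < x"
  have "2 powr (real m * log 2 x) = (2 powr (log 2 x)) powr real m"
    by (simp add: powr_powr mult.commute)
  also have "\<dots> = x ^ m" using x by (simp add: powr_realpow)
  finally show ?thesis by (simp add: powr_minus divide_inverse)
qed

theorem theoremB3:
  fixes k :: "nat \<Rightarrow> nat" and p :: "nat \<Rightarrow> real"
    and Adv :: "nat \<Rightarrow> inst \<Rightarrow> vec list \<times> vec list \<times> vec \<Rightarrow> (vec \<times> vec \<times> vec) pmf"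
  assumes "(\<lambda>n. log 2 (real n)) \<in> o(\<lambda>n. real (k n))"
    and "(\<lambda>n. log 2 (real n) / real n) \<in> o(\<lambda>n. p n)"
    and "eventually (\<lambda>n. 0 < 4.03 * p n \<and> 4.03 * p n < 1 \<and>
           H2 (4.03 * p n) + 4.03 * p n * log 2 3 < 1 - real (k n) / real n) sequentially"
    and "\<exists>c::nat. eventually (\<lambda>n. invert_success n (k n) (p n) (Adv n) \<ge> 1 / real n ^ c) sequentially"
  shows "\<exists>c::nat. eventually (\<lambda>n.
           lsn_success n (k n) (p n) (reduction (Adv n)) \<ge> 1 / 2 ^ k n + 1 / real n ^ c) sequentially"
proof -
  obtain c :: nat where ev4: "eventually (\<lambda>n. invert_success n (k n) (p n) (Adv n) \<ge> 1 / real n ^ c) sequentially"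
    using assms(4) by blast
  define C where "C = real (c + 2)"
  have C: "C > 0" by (simp add: C_def)
  have ev1: "eventually (\<lambda>n. norm (log 2 (real n)) \<le> (1 / C) * norm (real (k n))) sequentially"
    using landau_o.smallD[OF assms(1), of "1 / C"] C by simp
  have ev2: "eventually (\<lambda>n. norm (log 2 (real n) / real n) \<le> (1 / (400 * C)) * norm (p n)) sequentially"
    using landau_o.smallD[OF assms(2), of "1 / (400 * C)"] C by simp
  have ev5: "eventually (\<lambda>n. n \<ge> 3) sequentially" by (rule eventually_ge_at_top)
  show ?thesis
  proof (rule exI[of _ "c + 1"])
    show "eventually (\<lambda>n. lsn_success n (k n) (p n) (reduction (Adv n)) \<ge> 1 / 2 ^ k n + 1 / real n ^ (c+1)) sequentially"
      using ev1 ev2 assms(3) ev4 ev5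
    proof eventually_elim
      case (elim n)
      let ?p = "p n" and ?k = "k n"
      have n3: "real n \<ge> 3" using elim(5) by simp
      have n0: "n > 0" using elim(5) by simp
      have d: "0 < 4.03 * ?p" "4.03 * ?p < 1" and h: "H2 (4.03 * ?p) + 4.03 * ?p * log 2 3 < 1 - real ?k / real n"
        using elim(3) by auto
      have pp: "0 < ?p" "?p \<le> 1" using d by auto
      have lg: "log 2 (real n) > 0" using n3 by simp
      have k1: "C * log 2 (real n) \<le> real ?k"
        using elim(1) lg C by (simp add: field_simps)
      have p1: "400 * C * log 2 (real n) \<le> ?p * real n"
      proof -
        have "log 2 (real n) / real n \<le> (1 / (400 * C)) * ?p" using elim(2) lg n0 pp by simp
        then show ?thesis using C n0 by (simp add: field_simps)
      qed
      have kn: "?k \<le> n"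
      proof -
        have "0 \<le> H2 (4.03 * ?p)" by (rule H2_nonneg) (use d in auto)
        moreover have "0 < 4.03 * ?p * log 2 3" using d by simp
        ultimately have "real ?k / real n < 1" using h by linarith
        then show ?thesis using n0 by (simp add: field_simps)
      qed
      have ne: "lsn_instances n ?k \<noteq> {}" by (rule L_nonempty[OF kn])
      have inv: "1 / real n ^ c \<le> invert_success n ?k ?p (Adv n)" using elim(4) .
      have mi: "invert_success n ?k ?p (Adv n) \<le> lsn_success n ?k ?p (reduction (Adv n))
          + measure (Gen n ?k) {I. bad n ?k (4.02 * real n * ?p) I}
          + measure (noise ?p n) {e. real (weight n e) > 2.01 * real n * ?p}"
        by (rule main_ineq[OF ne])
      have lnC: "2 powr (- (C * log 2 (real n))) = 1 / real n ^ (c+2)"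
        using pow_log_inv[of "real n" "c+2"] n0 by (simp add: C_def)
      have bb: "measure (Gen n ?k) {I. bad n ?k (4.02 * real n * ?p) I} \<le> 2 / real n ^ (c+2)"
      proof -
        have "measure (Gen n ?k) {I. bad n ?k (4.02 * real n * ?p) I} \<le> 2 * 2 powr (- (?p * n) / 400)"
          by (rule bad_bound[OF n0 ne d h])
        also have "2 powr (- (?p * n) / 400) \<le> 2 powr (- (C * log 2 (real n)))"
          using p1 by simp
        finally show ?thesis using lnC by simp
      qed
      have hb: "measure (noise ?p n) {e. real (weight n e) > 2.01 * real n * ?p} \<le> 1 / real n ^ (c+2)"
      proof -
        have "measure (noise ?p n) {e. real (weight n e) > 2.01 * real n * ?p} \<le> 2 powr (- (2.01 * real n * ?p)) * (1 + ?p)^n"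
          by (rule heavy_bound) (use pp in auto)
        also have "\<dots> \<le> 2 powr (- (2.01 * real n * ?p)) * 2 powr (2 * ?p * n)"
          by (intro mult_left_mono one_plus_pow) (use pp in auto)
        also have "\<dots> = 2 powr (- (?p * n / 100))"
          by (simp add: powr_add[symmetric] algebra_simps)
        also have "\<dots> \<le> 2 powr (- (C * log 2 (real n)))"
        proof -
          have p1': "400 * (C * log 2 (real n)) \<le> ?p * real n" using p1 by (simp add: mult.assoc)
          have cl: "0 \<le> C * log 2 (real n)" using lg C by simp
          have "- (?p * n / 100) \<le> - (C * log 2 (real n))" using p1' cl by linarith
          then show ?thesis by simp
        qed
        finally show ?thesis using lnC by simp
      qed
      have kb: "1 / 2 ^ ?k \<le> 1 / real n ^ (c+2)"
      proof -
        have "1 / (2::real) ^ ?k = 2 powr (- real ?k)" by (simp add: powr_minus powr_realpow divide_inverse)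
        also have "\<dots> \<le> 2 powr (- (C * log 2 (real n)))" using k1 by simp
        finally show ?thesis using lnC by simp
      qed
      have fin: "1 / real n ^ c - 3 / real n ^ (c+2) \<ge> 1 / real n ^ (c+2) + 1 / real n ^ (c+1)"
      proof -
        have pos: "real n ^ c > 0" using n0 by simp
        have "real n * real n \<ge> 3 * real n" using n3 by (intro mult_right_mono) auto
        then have "real n * real n \<ge> 4 + real n" using n3 by linarith
        moreover have "1 / (real n * real n) + 1 / real n + 3 / (real n * real n) = (4 + real n) / (real n * real n)"
          using n0 by (simp add: field_simps)
        moreover have "real n * real n > 0" using n0 by simp
        ultimately have "1 - 3 / (real n * real n) \<ge> 1 / (real n * real n) + 1 / real n"
          by (smt (verit) divide_le_eq_1_pos)
        then have "(1 - 3 / (real n * real n)) / real n ^ c \<ge> (1 / (real n * real n) + 1 / real n) / real n ^ c"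
          using pos by (intro divide_right_mono) auto
        then show ?thesis using n0 by (simp add: field_simps power_add)
      qed
      show ?case using inv mi bb hb kb fin by linarith
    qed
  qed
qed

end
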